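(* Let $N\ge 4$ and let $\mathbf M$ be an $(N+1,2)$-admissible matrix whose core matrix $\widetilde{\mathbf M}$ is tridiagonal (for a suitable ordering of the transient states). Then $\mathbf M$ is micro-reversible, i.e. if $(\mu,\widetilde{\mathbf w},\widetilde{\mathbf z})$ is its characteristic triple then $\widetilde w_i\widetilde M_{ij}\widetilde z_j=\widetilde w_j\widetilde M_{ji}\widetilde z_i$ for all transient indices $i,j$.
   Context: Matrices are column-stochastic (nonnegative entries, columns summing to $1$). For $1\le k<N-1$, an $(N+1)\times(N+1)$ column-stochastic matrix $\mathbf M$ is $(N+1,k)$-admissible if, after a simultaneous permutation of rows and columns, $\mathbf M=\begin{pmatrix}\widetilde{\mathbf M}&\mathbf 0\\ \mathbf A&\mathbf I\end{pmatrix}$ with $\mathbf I$ the $k\times k$ identity, $\widetilde{\mathbf M}$ an irreducible $(N+1-k)\times(N+1-k)$ matrix (the core matrix, indexed by the transient states), and $\mathbf A$ a $k\times(N+1-k)$ matrix with no identically zero row. The core is strictly substochastic; let $\mu=\rho(\widetilde{\mathbf M})\in(0,1)$ be its spectral radius and let $\widetilde{\mathbf w},\widetilde{\mathbf z}$ be the unique positive left and right eigenvectors of $\widetilde{\mathbf M}$ for $\mu$, normalised by $\langle\widetilde{\mathbf w},\mathbf 1\rangle=\langle\widetilde{\mathbf w},\widetilde{\mathbf z}\rangle=1$; $(\mu,\widetilde{\mathbf w},\widetilde{\mathbf z})$ is the characteristic triple. $\mathbf M$ is called micro-reversible if $\widetilde w_i\widetilde M_{ij}\widetilde z_j=\widetilde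 w_j\widetilde M_{ji}\widetilde z_i$ for all transient $i,j$. *)

theory Defs
  imports "Jordan_Normal_Form.Spectral_Radius"
begin

definition col_stochastic :: "nat \<Rightarrow> (nat \<Rightarrow> nat \<Rightarrow> real) \<Rightarrow> bool" where
  "col_stochastic N M \<longleftrightarrow>
     (\<forall>i\<le>N. \<forall>j\<le>N. M i j \<ge> 0) \<and> (\<forall>j\<le>N. (\<Sum>i\<le>N. M i j) = 1)"

definition irreducible_on :: "nat set \<Rightarrow> (nat \<Rightarrow> nat \<Rightarrow> real) \<Rightarrow> bool" where
  "irreducible_on T M \<longleftrightarrow>
     (\<forall>i\<in>T. \<forall>j\<in>T. (i, j) \<in> {(a, b). a \<in> T \<and> b \<in> T \<and> M a b \<noteq> 0}\<^sup>*)"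

text \<open>(N+1,k)-admissibility with T the set of transient states (the complement
  of T in 0..N being the k absorbing states). After a simultaneous permutation
  putting T first, M has block form [[core, 0],[A, I]]: this is exactly that the
  columns of absorbing states are unit columns, A has no zero row, and the core
  restricted to T x T is irreducible.\<close>

definition admissible_wrt :: "nat \<Rightarrow> nat \<Rightarrow> (nat \<Rightarrow> nat \<Rightarrow> real) \<Rightarrow> nat set \<Rightarrow> bool" where
  "admissible_wrt N k M T \<longleftrightarrow>
     1 \<le> k \<and> k < N - 1 \<and> col_stochastic N M \<and>
     T \<subseteq> {..N} \<and> card ({..N} - T) = k \<and>
     (\<forall>j\<in>{..N} - T. \<forall>i\<le>N. M i j = (if i = j then 1 else 0)) \<and>
     (\<forall>i\<in>{..N} - T. \<exists>j\<in>T. M i j \<noteq> 0) \<and>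
     irreducible_on T M"

definition core_mat :: "(nat \<Rightarrow> nat \<Rightarrow> real) \<Rightarrow> nat set \<Rightarrow> complex mat" where
  "core_mat M T = mat (card T) (card T)
     (\<lambda>(a, b). complex_of_real (M (sorted_list_of_set T ! a) (sorted_list_of_set T ! b)))"

definition tridiagonal_on :: "nat set \<Rightarrow> (nat \<Rightarrow> nat \<Rightarrow> real) \<Rightarrow> bool" where
  "tridiagonal_on T M \<longleftrightarrow>
     (\<exists>\<sigma>. bij_betw \<sigma> {..<card T} T \<and>
        (\<forall>a<card T. \<forall>b<card T. (a + 1 < b \<or> b + 1 < a) \<longrightarrow> M (\<sigma> a) (\<sigma> b) = 0))"

definition char_triple ::
  "(nat \<Rightarrow> nat \<Rightarrow> real) \<Rightarrow> nat set \<Rightarrow> real \<Rightarrow> (nat \<Rightarrow> real) \<Rightarrow> (nat \<Rightarrow> real) \<Rightarrow> bool" where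
  "char_triple M T \<mu> w z \<longleftrightarrow>
     \<mu> = spectral_radius (core_mat M T) \<and>
     (\<forall>i\<in>T. w i > 0) \<and> (\<forall>i\<in>T. z i > 0) \<and>
     (\<forall>j\<in>T. (\<Sum>i\<in>T. w i * M i j) = \<mu> * w j) \<and>
     (\<forall>i\<in>T. (\<Sum>j\<in>T. M i j * z j) = \<mu> * z i) \<and>
     (\<Sum>i\<in>T. w i) = 1 \<and> (\<Sum>i\<in>T. w i * z i) = 1"

definition micro_reversible_wrt ::
  "(nat \<Rightarrow> nat \<Rightarrow> real) \<Rightarrow> nat set \<Rightarrow> (nat \<Rightarrow> real) \<Rightarrow> (nat \<Rightarrow> real) \<Rightarrow> bool" where
  "micro_reversible_wrt M T w z \<longleftrightarrow>
     (\<forall>i\<in>T. \<forall>j\<in>T. w i * M i j * z j = w j * M j i * z i)"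

end

theory Submission
  imports Defs
begin

lemma sum_single_nz:
  fixes g :: "nat \<Rightarrow> real"
  assumes "c < n" "\<And>b. b < n \<Longrightarrow> b \<noteq> c \<Longrightarrow> g b = 0"
  shows "(\<Sum>b<n. g b) = g c"
proof -
  have "(\<Sum>b<n. g b) = g c + (\<Sum>b\<in>{..<n} - {c}. g b)"
    using assms(1) by (simp add: sum.remove)
  also have "(\<Sum>b\<in>{..<n} - {c}. g b) = 0"
    using assms(2) by (intro sum.neutral) auto
  finally show ?thesis by simp
qed

theorem lemma2:
  fixes N :: nat and M :: "nat \<Rightarrow> nat \<Rightarrow> real" and T :: "nat set"
    and \<mu> :: real and w z :: "nat \<Rightarrow> real"
  assumes "N \<ge> 4"
    and "admissible_wrt N 2 M T"
    and "tridiagonal_on T M"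
    and "char_triple M T \<mu> w z"
  shows "micro_reversible_wrt M T w z"
proof -
  obtain \<sigma> where bij: "bij_betw \<sigma> {..<card T} T"
    and tri: "\<And>a b. a<card T \<Longrightarrow> b<card T \<Longrightarrow> (a + 1 < b \<or> b + 1 < a) \<Longrightarrow> M (\<sigma> a) (\<sigma> b) = 0"
    using assms(3) unfolding tridiagonal_on_def by blast
  have L: "\<And>j. j\<in>T \<Longrightarrow> (\<Sum>i\<in>T. w i * M i j) = \<mu> * w j"
    and R: "\<And>i. i\<in>T \<Longrightarrow> (\<Sum>j\<in>T. M i j * z j) = \<mu> * z i"
    using assms(4) unfolding char_triple_def by auto
  define n where "n = card T"
  define F where "F i j = w i * M i j * z j - w j * M j i * z i" for i j
  define G where "G a b = F (\<sigma> a) (\<sigma> b)" for a b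
  have rowT: "(\<Sum>j\<in>T. F i j) = 0" if "i \<in> T" for i
  proof -
    have "(\<Sum>j\<in>T. F i j) = w i * (\<Sum>j\<in>T. M i j * z j) - z i * (\<Sum>j\<in>T. w j * M j i)"
      unfolding F_def by (simp add: sum_subtractf sum_distrib_left algebra_simps)
    also have "\<dots> = 0" using L[OF that] R[OF that] by simp
    finally show ?thesis .
  qed
  have row: "(\<Sum>b<n. G a b) = 0" if "a < n" for a
  proof -
    have "\<sigma> a \<in> T" using bij that n_def bij_betwE by blast
    hence "(\<Sum>j\<in>T. F (\<sigma> a) j) = 0" by (rule rowT)
    moreover have "(\<Sum>b<n. G a b) = (\<Sum>j\<in>T. F (\<sigma> a) j)"
      unfolding G_def n_def by (rule sum.reindex_bij_betw[OF bij])
    ultimately show ?thesis by simp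
  qed
  have Gtri: "G a b = 0" if "a < n" "b < n" "a + 1 < b \<or> b + 1 < a" for a b
    using tri[of a b] tri[of b a] that unfolding G_def F_def n_def by auto
  have Gdiag: "G a a = 0" for a unfolding G_def F_def by simp
  have Ganti: "G a b = - G b a" for a b unfolding G_def F_def by simp
  have key: "a + 1 < n \<Longrightarrow> G a (a+1) = 0" for a
  proof (induction a)
    case 0
    have "(\<Sum>b<n. G 0 b) = G 0 1"
    proof (rule sum_single_nz)
      show "1 < n" using 0 by simp
      fix b assume b: "b < n" "b \<noteq> 1"
      show "G 0 b = 0"
      proof (cases "b = 0")
        case True then show ?thesis using Gdiag by simp
      next
        case False then show ?thesis using b 0 by (intro Gtri) auto
      qed
    qed
    then show ?case using row[of 0] 0 by simp
  next
    case (Suc a)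
    have IH: "G a (a+1) = 0" using Suc by simp
    have "(\<Sum>b<n. G (Suc a) b) = G (Suc a) (Suc a + 1)"
    proof (rule sum_single_nz)
      show "Suc a + 1 < n" using Suc by simp
      fix b assume b: "b < n" "b \<noteq> Suc a + 1"
      show "G (Suc a) b = 0"
      proof (cases "b = a \<or> b = Suc a")
        case True
        then show ?thesis using IH Ganti[of "Suc a" a] Gdiag by auto
      next
        case False
        then show ?thesis using b Suc.prems by (intro Gtri) auto
      qed
    qed
    then show ?case using row[of "Suc a"] Suc.prems by simp
  qed
  show ?thesis unfolding micro_reversible_wrt_def
  proof (intro ballI)
    fix i j assume i: "i \<in> T" and j: "j \<in> T"
    obtain a where a: "a < n" "i = \<sigma> a" using bij i n_def
      by (metis bij_betw_iff_bijections lessThan_iff)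
    obtain b where b: "b < n" "j = \<sigma> b" using bij j n_def
      by (metis bij_betw_iff_bijections lessThan_iff)
    have "G a b = 0"
    proof -
      consider "a + 1 < b \<or> b + 1 < a" | "a = b" | "b = a + 1" | "a = b + 1" by linarith
      then show ?thesis
      proof cases
        case 1 then show ?thesis using Gtri a b by auto
      next
        case 2 then show ?thesis using Gdiag by simp
      next
        case 3 then show ?thesis using key[of a] b by simp
      next
        case 4 then show ?thesis using key[of b] a Ganti[of a b] by simp
      qed
    qed
    then show "w i * M i j * z j = w j * M j i * z i"
      unfolding G_def F_def using a b by simp
  qed
qed

end
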